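(* Let $E$ be a closed type of system $\mathcal F$ not containing the type constant $O$. If $E$ is an input type, then $E$ is an output type.
   Context: $\lambda$-terms are those of the untyped $\lambda$-calculus; $Fv(t)$ denotes the free variables of $t$; a term is normal if it contains no $\beta$-redex. Types of system $\mathcal F$ are built from type variables and type constants (atomic types on which one cannot quantify; $O$ is such a constant) with $\rightarrow$ and $\forall$; only proper types are considered (in every $\forall X A$, $X$ occurs free in $A$). A type is closed if it has no free type variable. Typing judgements $\Gamma\vdash_{\mathcal F} t:A$, with $\Gamma = x_1:A_1,\dots,x_n:A_n$, are generated by: (ax) $\Gamma \vdash x_i : A_i$; ($\rightarrow_i$) from $\Gamma, x:B \vdash t : C$ infer $\Gamma \vdash \lambda x t : B \rightarrow C$; ($\rightarrow_e$) from $\Gamma \vdash u : B\rightarrow C$ and $\Gamma \vdash v : B$ infer $\Gamma \vdash (u)v : C$; ($\forall_i$) from $\Gamma \vdash t : A$ with $X$ not free in $\Gamma$ infer $\Gamma \vdash t : \forall X A$; ($\forall_e$) from $\Gamma \vdash t : \forall X A$ infer $\Gamma \vdash t : A[C/X]$ for any type $C$. The system $\mathcal F_0$ is system $\mathcal F$ without the rule ($\forall_e$); its judgements are written $\vdash_{\mathcal F_0}$. A closed type $E$ is an input type if for every normal $\lambda$-term $t$, $\vdash_{\mathcal F} t : E$ implies $\vdash_{\mathcal F_0} t : E$. A closed type $S$ not containing $O$ is an output type if for every normal $\lambda$-term $t$ and term variable $\alpha$, $\alpha : O \vdash_{\mathcal F} t : S$ implies $\alpha\notin Fv(t)$. *)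

theory Defs
  imports Main
begin

datatype trm = Var nat | Lam nat trm | App trm trm

fun fv :: "trm \<Rightarrow> nat set" where
  "fv (Var x) = {x}"
| "fv (Lam x t) = fv t - {x}"
| "fv (App u v) = fv u \<union> fv v"

fun normal :: "trm \<Rightarrow> bool" where
  "normal (Var x) = True"
| "normal (Lam x t) = normal t"
| "normal (App u v) = ((\<forall>x t. u \<noteq> Lam x t) \<and> normal u \<and> normal v)"

section \<open>Types of system F with type constants (de Bruijn type variables)\<close>

datatype ty = TV nat | TC nat | Arr ty ty | All ty

definition tO :: ty where "tO = TC 0"

fun has_O :: "ty \<Rightarrow> bool" where
  "has_O (TV i) = False"
| "has_O (TC c) = (c = 0)"
| "has_O (Arr A B) = (has_O A \<or> has_O B)"
| "has_O (All A) = has_O A"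

fun occurs :: "nat \<Rightarrow> ty \<Rightarrow> bool" where
  "occurs k (TV i) = (i = k)"
| "occurs k (TC c) = False"
| "occurs k (Arr A B) = (occurs k A \<or> occurs k B)"
| "occurs k (All A) = occurs (Suc k) A"

fun proper :: "ty \<Rightarrow> bool" where
  "proper (TV i) = True"
| "proper (TC c) = True"
| "proper (Arr A B) = (proper A \<and> proper B)"
| "proper (All A) = (occurs 0 A \<and> proper A)"

fun closed_at :: "nat \<Rightarrow> ty \<Rightarrow> bool" where
  "closed_at k (TV i) = (i < k)"
| "closed_at k (TC c) = True"
| "closed_at k (Arr A B) = (closed_at k A \<and> closed_at k B)"
| "closed_at k (All A) = closed_at (Suc k) A"

definition closed_ty :: "ty \<Rightarrow> bool" where "closed_ty A = closed_at 0 A"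

fun lift :: "nat \<Rightarrow> ty \<Rightarrow> ty" where
  "lift k (TV i) = (if i < k then TV i else TV (Suc i))"
| "lift k (TC c) = TC c"
| "lift k (Arr A B) = Arr (lift k A) (lift k B)"
| "lift k (All A) = All (lift (Suc k) A)"

fun subst :: "ty \<Rightarrow> nat \<Rightarrow> ty \<Rightarrow> ty" where
  "subst (TV i) k C = (if i < k then TV i else if i = k then C else TV (i - 1))"
| "subst (TC c) k C = TC c"
| "subst (Arr A B) k C = Arr (subst A k C) (subst B k C)"
| "subst (All A) k C = All (subst A (Suc k) (lift 0 C))"

section \<open>Typing: system F (elim = True) and F0 (elim = False, no \<forall>-elimination)\<close>

type_synonym ctx = "(nat \<times> ty) list"

inductive typing :: "bool \<Rightarrow> ctx \<Rightarrow> trm \<Rightarrow> ty \<Rightarrow> bool" where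
  ax: "map_of \<Gamma> x = Some A \<Longrightarrow> typing b \<Gamma> (Var x) A"
| arr_i: "proper B \<Longrightarrow> typing b ((x, B) # \<Gamma>) t C \<Longrightarrow> typing b \<Gamma> (Lam x t) (Arr B C)"
| arr_e: "typing b \<Gamma> u (Arr B C) \<Longrightarrow> typing b \<Gamma> v B \<Longrightarrow> typing b \<Gamma> (App u v) C"
| all_i: "typing b (map (\<lambda>(y, T). (y, lift 0 T)) \<Gamma>) t A \<Longrightarrow> occurs 0 A
           \<Longrightarrow> typing b \<Gamma> t (All A)"
| all_e: "b \<Longrightarrow> typing b \<Gamma> t (All A) \<Longrightarrow> proper C \<Longrightarrow> typing b \<Gamma> t (subst A 0 C)"

abbreviation typF :: "ctx \<Rightarrow> trm \<Rightarrow> ty \<Rightarrow> bool" where "typF \<equiv> typing True"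
abbreviation typF0 :: "ctx \<Rightarrow> trm \<Rightarrow> ty \<Rightarrow> bool" where "typF0 \<equiv> typing False"

definition input_type :: "ty \<Rightarrow> bool" where
  "input_type E \<longleftrightarrow> proper E \<and> closed_ty E \<and>
     (\<forall>t. normal t \<longrightarrow> typF [] t E \<longrightarrow> typF0 [] t E)"

definition output_type :: "ty \<Rightarrow> bool" where
  "output_type S \<longleftrightarrow> proper S \<and> closed_ty S \<and> \<not> has_O S \<and>
     (\<forall>t \<alpha>. normal t \<longrightarrow> typF [(\<alpha>, tO)] t S \<longrightarrow> \<alpha> \<notin> fv t)"

end

theory Submission
  imports Defs
begin

fun tsubst :: "trm \<Rightarrow> nat \<Rightarrow> trm \<Rightarrow> trm" where
  "tsubst (Var x) a u = (if x = a then u else Var x)"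
| "tsubst (Lam x t) a u = (if x = a then Lam x t else Lam x (tsubst t a u))"
| "tsubst (App t1 t2) a u = App (tsubst t1 a u) (tsubst t2 a u)"

fun nohead :: "nat \<Rightarrow> trm \<Rightarrow> bool" where
  "nohead a (Var x) = True"
| "nohead a (Lam x t) = (x = a \<or> nohead a t)"
| "nohead a (App u v) = (u \<noteq> Var a \<and> nohead a u \<and> nohead a v)"

fun lr :: "trm \<Rightarrow> nat" where
  "lr (Lam x t) = Suc (lr t)"
| "lr _ = 0"

fun mr :: "trm \<Rightarrow> nat" where
  "mr (Var x) = 0"
| "mr (Lam x t) = max (Suc (lr t)) (mr t)"
| "mr (App u v) = max (mr u) (mr v)"

fun isLam :: "trm \<Rightarrow> bool" where
  "isLam (Lam x t) = True"
| "isLam _ = False"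

fun isArr :: "ty \<Rightarrow> bool" where
  "isArr (Arr A B) = True"
| "isArr _ = False"

fun lamk :: "nat \<Rightarrow> trm" where
  "lamk 0 = Lam 0 (Var 0)"
| "lamk (Suc k) = Lam 0 (lamk k)"

fun Tk :: "nat \<Rightarrow> ty" where
  "Tk 0 = Arr (TV 0) (TV 0)"
| "Tk (Suc k) = Arr (TV 0) (Tk k)"

lemma map_lift_ctx: "map_of (map (\<lambda>(y, T). (y, g T)) \<Gamma>) x = map_option g (map_of \<Gamma> x)"
  by (induction \<Gamma>) auto

lemma closed_lift: "closed_at j A \<Longrightarrow> j \<le> k \<Longrightarrow> lift k A = A"
  by (induction A arbitrary: j k) fastforce+

lemma closed_subst: "closed_at j A \<Longrightarrow> j \<le> k \<Longrightarrow> subst A k C = A"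
  by (induction A arbitrary: j k C) fastforce+

lemma closed_occurs: "closed_at j A \<Longrightarrow> j \<le> k \<Longrightarrow> \<not> occurs k A"
  by (induction A arbitrary: j k) fastforce+

lemma size_lift: "size (lift k A) = size A"
  by (induction A arbitrary: k) auto

fun rep :: "ty \<Rightarrow> ty \<Rightarrow> ty" where
  "rep D (TV i) = TV i"
| "rep D (TC c) = (if c = 0 then D else TC c)"
| "rep D (Arr A B) = Arr (rep D A) (rep D B)"
| "rep D (All A) = All (rep D A)"

lemma rep_lift: "closed_ty D \<Longrightarrow> rep D (lift k A) = lift k (rep D A)"
  by (induction A arbitrary: k) (auto simp: closed_ty_def closed_lift)

lemma rep_subst: "closed_ty D \<Longrightarrow> rep D (subst A k C) = subst (rep D A) k (rep D C)"
  by (induction A arbitrary: k C) (auto simp: closed_ty_def closed_subst rep_lift)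

lemma rep_occurs: "closed_ty D \<Longrightarrow> occurs k (rep D A) = occurs k A"
  by (induction A arbitrary: k) (auto simp: closed_ty_def dest: closed_occurs)

lemma rep_proper: "closed_ty D \<Longrightarrow> proper D \<Longrightarrow> proper A \<Longrightarrow> proper (rep D A)"
  by (induction A) (auto simp: rep_occurs)

lemma rep_noO: "\<not> has_O A \<Longrightarrow> rep D A = A"
  by (induction A) auto

lemma typing_rep:
  assumes "typing b \<Gamma> t A" "closed_ty D" "proper D"
  shows "typing b (map (\<lambda>(y, T). (y, rep D T)) \<Gamma>) t (rep D A)"
  using assms
proof (induction rule: typing.induct)
  case (ax \<Gamma> x A b)
  then show ?case by (intro typing.ax) (simp add: map_lift_ctx)
next
  case (arr_i B b x \<Gamma> t C)
  then show ?case by (auto intro!: typing.arr_i rep_proper)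
next
  case (arr_e b \<Gamma> u B C v)
  then show ?case by (auto intro: typing.arr_e)
next
  case (all_i b \<Gamma> t A)
  have "map (\<lambda>(y, T). (y, lift 0 T)) (map (\<lambda>(y, T). (y, rep D T)) \<Gamma>)
      = map (\<lambda>(y, T). (y, rep D T)) (map (\<lambda>(y, T). (y, lift 0 T)) \<Gamma>)"
    using all_i by (auto simp: rep_lift)
  then have "typing b (map (\<lambda>(y, T). (y, lift 0 T)) (map (\<lambda>(y, T). (y, rep D T)) \<Gamma>)) t (rep D A)"
    using all_i.IH all_i.prems by metis
  then show ?case using all_i by (auto intro!: typing.all_i simp: rep_occurs)
next
  case (all_e b \<Gamma> t A C)
  then show ?case
    by (auto simp: rep_subst intro!: typing.all_e[where A="rep D A"] rep_proper)
qed

lemma var_O: "typing b \<Gamma> s A \<Longrightarrow> s = Var x \<Longrightarrow> map_of \<Gamma> x = Some tO \<Longrightarrow> A = tO"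
proof (induction arbitrary: x rule: typing.induct)
  case (all_i b \<Gamma> t A)
  then have "A = tO" by (simp add: map_lift_ctx tO_def)
  with all_i show ?case by (simp add: tO_def)
next
  case (all_e b \<Gamma> t A C)
  then show ?case by (simp add: tO_def)
qed auto

lemma nohead_typ: "typing b \<Gamma> t A \<Longrightarrow> map_of \<Gamma> a = Some tO \<Longrightarrow> nohead a t"
proof (induction rule: typing.induct)
  case (arr_e b \<Gamma> u B C v)
  then show ?case using var_O[of b \<Gamma> u "Arr B C" a] by (auto simp: tO_def)
next
  case (arr_i B b x \<Gamma> t C)
  then show ?case by (cases "x = a") auto
next
  case (all_i b \<Gamma> t A)
  then show ?case by (simp add: map_lift_ctx tO_def)
qed auto

lemma normal_tsubst: "normal t \<Longrightarrow> nohead a t \<Longrightarrow> normal u \<Longrightarrow> normal (tsubst t a u)"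
proof (induction t)
  case (App t1 t2)
  have "\<forall>x s. tsubst t1 a u \<noteq> Lam x s"
    using App.prems by (cases t1) auto
  then show ?case using App by auto
qed auto

lemma typing_subst:
  assumes "typing b \<Gamma> t A" "map_of \<Gamma> a = Some D" "closed_ty D" "\<forall>\<Gamma>'. typing b \<Gamma>' u D"
  shows "typing b \<Gamma> (tsubst t a u) A"
  using assms
proof (induction rule: typing.induct)
  case (ax \<Gamma> x A b)
  then show ?case by (auto intro: typing.ax)
next
  case (arr_i B b x \<Gamma> t C)
  then show ?case by (auto intro: typing.arr_i)
next
  case (arr_e b \<Gamma> u B C v)
  then show ?case by (auto intro: typing.arr_e)
next
  case (all_i b \<Gamma> t A)
  have "lift 0 D = D" using all_i closed_lift by (simp add: closed_ty_def)
  then show ?case using all_i by (auto intro!: typing.all_i simp: map_lift_ctx)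
next
  case (all_e b \<Gamma> t A C)
  then show ?case by (auto intro: typing.all_e)
qed

lemma typing_ctx:
  "typing b \<Gamma> t A \<Longrightarrow> (\<forall>x\<in>fv t. map_of \<Gamma>' x = map_of \<Gamma> x) \<Longrightarrow> typing b \<Gamma>' t A"
proof (induction arbitrary: \<Gamma>' rule: typing.induct)
  case (ax \<Gamma> x A b)
  then show ?case by (auto intro: typing.ax)
next
  case (arr_i B b x \<Gamma> t C)
  then show ?case by (auto intro!: typing.arr_i)
next
  case (arr_e b \<Gamma> u B C v)
  then show ?case by (auto intro: typing.arr_e)
next
  case (all_i b \<Gamma> t A)
  then show ?case by (auto intro!: typing.all_i simp: map_lift_ctx)
next
  case (all_e b \<Gamma> t A C)
  then show ?case by (auto intro: typing.all_e)
qed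

lemma typing_fv: "typing b \<Gamma> t A \<Longrightarrow> fv t \<subseteq> dom (map_of \<Gamma>)"
proof (induction rule: typing.induct)
  case (arr_i B b x \<Gamma> t C)
  then show ?case by (fastforce simp: subset_iff domIff split: if_splits)
next
  case (all_i b \<Gamma> t A)
  then show ?case by (auto simp: map_lift_ctx)
qed auto

lemma fv_tsubst: "fv u = {} \<Longrightarrow> fv (tsubst t a u) \<subseteq> fv t - {a}"
  by (induction t) auto

lemma mr_tsubst: "a \<in> fv t \<Longrightarrow> lr u \<le> mr (tsubst t a u)"
proof (induction t)
  case (Var x)
  then show ?case by (cases u) auto
qed auto

lemma lamk_typ: "typing b \<Gamma> (lamk k) (Tk k)"
proof (induction k arbitrary: \<Gamma>)
  case 0
  then show ?case by (auto intro!: typing.arr_i typing.ax)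
next
  case (Suc k)
  then show ?case by (auto intro!: typing.arr_i)
qed

lemma Tk_occ: "occurs 0 (Tk k)" by (induction k) auto
lemma Tk_proper: "proper (Tk k)" by (induction k) auto
lemma Tk_closed: "closed_at 1 (Tk k)" by (induction k) auto
lemma lamk_normal: "normal (lamk k)" by (induction k) auto
lemma lamk_fv: "fv (lamk k) = {}" by (induction k) auto
lemma lamk_lr: "lr (lamk k) = Suc k" by (induction k) auto

lemma lamk_all: "typing b \<Gamma> (lamk k) (All (Tk k))"
  by (auto intro!: typing.all_i lamk_typ Tk_occ)

lemma lr_bound: "typing b \<Gamma> t A \<Longrightarrow> \<not> b \<Longrightarrow> lr t \<le> size A"
proof (induction rule: typing.induct)
  case (ax \<Gamma> x A b)
  then show ?case by simp
next
  case (arr_i B b x \<Gamma> t C)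
  then show ?case by simp
next
  case (arr_e b \<Gamma> u B C v)
  then show ?case by simp
next
  case (all_i b \<Gamma> t A)
  then show ?case by simp
next
  case (all_e b \<Gamma> t A C)
  then show ?case by simp
qed

lemma Q: "typing b \<Gamma> t A \<Longrightarrow> \<not> b \<Longrightarrow> normal t \<Longrightarrow> (\<forall>(y,T)\<in>set \<Gamma>. size T \<le> N)
   \<Longrightarrow> (isLam t \<longrightarrow> size A \<le> N) \<Longrightarrow> (\<not> isLam t \<longrightarrow> isArr A \<longrightarrow> size A \<le> N) \<and> mr t \<le> N"
proof (induction rule: typing.induct)
  case (ax \<Gamma> x A b)
  then show ?case by (auto dest: map_of_SomeD)
next
  case (arr_i B b x \<Gamma> t C)
  have "lr t \<le> size C" using lr_bound arr_i by blast
  with arr_i show ?case by (cases t) auto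
next
  case (arr_e b \<Gamma> u B C v)
  then have u: "\<not> isLam u" by (cases u) auto
  with arr_e have "size (Arr B C) \<le> N" "mr u \<le> N" by auto
  with arr_e show ?case by auto
next
  case (all_i b \<Gamma> t A)
  have "\<forall>(y,T)\<in>set (map (\<lambda>(y, T). (y, lift 0 T)) \<Gamma>). size T \<le> N"
    using all_i.prems(3) by (fastforce simp: size_lift)
  with all_i show ?case by auto
next
  case (all_e b \<Gamma> t A C)
  then show ?case by simp
qed

theorem theorem2p2p8:
  assumes "proper E" and "closed_ty E" and "\<not> has_O E"
    and "input_type E"
  shows "output_type E"
proof -
  have "\<alpha> \<notin> fv t" if nt: "normal t" and ty: "typF [(\<alpha>, tO)] t E" for t \<alpha>
  proof
    assume af: "\<alpha> \<in> fv t"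
    define k where "k = size E"
    define D where "D = All (Tk k)"
    define u where "u = lamk k"
    have cD: "closed_ty D" using Tk_closed by (simp add: D_def closed_ty_def)
    have pD: "proper D" using Tk_occ Tk_proper by (simp add: D_def)
    have nh: "nohead \<alpha> t" using nohead_typ[OF ty] by simp
    have "typF (map (\<lambda>(y, T). (y, rep D T)) [(\<alpha>, tO)]) t (rep D E)"
      by (rule typing_rep[OF ty cD pD])
    then have t1: "typF [(\<alpha>, D)] t E" using assms(3) by (simp add: rep_noO tO_def)
    have t2: "typF [(\<alpha>, D)] (tsubst t \<alpha> u) E"
      by (rule typing_subst[OF t1 _ cD]) (auto simp: D_def u_def lamk_all)
    have "fv t \<subseteq> {\<alpha>}" using typing_fv[OF ty] by simp
    then have "fv (tsubst t \<alpha> u) = {}" using fv_tsubst[of u t \<alpha>] lamk_fv u_def by auto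
    then have t3: "typF [] (tsubst t \<alpha> u) E" using typing_ctx[OF t2] by auto
    have n3: "normal (tsubst t \<alpha> u)"
      using normal_tsubst[OF nt nh] lamk_normal u_def by auto
    have t4: "typF0 [] (tsubst t \<alpha> u) E" using assms(4) t3 n3 by (auto simp: input_type_def)
    have "mr (tsubst t \<alpha> u) \<le> size E" using Q[OF t4 _ n3, of "size E"] by auto
    moreover have "lr u \<le> mr (tsubst t \<alpha> u)" by (rule mr_tsubst[OF af])
    ultimately show False by (simp add: u_def lamk_lr k_def)
  qed
  then show ?thesis using assms by (auto simp: output_type_def)
qed

end
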